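(* Let $\mathbb K\in\{\mathbb R,\mathbb C\}$, $\Omega=\mathbb K^{\mathbb Z_+}$, let $\mu=\bigotimes_{n\ge0}\mu_n$ be a product of Borel probability measures $\mu_n$ on $\mathbb K$, and let $\mathbf w=(w_n)_{n\ge1}$ be a sequence of non-zero scalars. Then $\mu$ is $B_{\mathbf w}$-invariant if and only if for every $n\ge1$ and every Borel set $A\subseteq\mathbb K$, $\mu_n(A)=\mu_0(w_1\cdots w_nA)$ (i.e. $\mu_n$ is the image of $\mu_0$ under $t\mapsto t/(w_1\cdots w_n)$).
   Context: $\Omega$ carries the product topology and its Borel $\sigma$-algebra. $B_{\mathbf w}:\Omega\to\Omega$ is defined by $(B_{\mathbf w}t)_j=w_{j+1}t_{j+1}$ for $j\ge0$, where $t=(t_j)_{j\ge0}$. Invariance means $\mu(B_{\mathbf w}^{-1}(B))=\mu(B)$ for all Borel $B\subseteq\Omega$. *)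

theory Defs
  imports "HOL-Probability.Probability"
begin

definition wshift :: "(nat \<Rightarrow> 'a::times) \<Rightarrow> (nat \<Rightarrow> 'a) \<Rightarrow> (nat \<Rightarrow> 'a)" where
  "wshift w t = (\<lambda>j. w (Suc j) * t (Suc j))"

end

theory Submission
  imports Defs
begin

locale wsetup =
  fixes M :: "nat \<Rightarrow> 'a::{real_normed_field,second_countable_topology} measure" and w :: "nat \<Rightarrow> 'a"
  assumes MP: "\<And>n. prob_space (M n)" and MS: "\<And>n. sets (M n) = sets borel"
    and w: "\<And>n. n \<ge> 1 \<Longrightarrow> w n \<noteq> 0"
begin

definition W :: "nat \<Rightarrow> 'a" where "W n = (\<Prod>k=1..n. w k)"

lemma W_Suc: "W (Suc n) = W n * w (Suc n)"
  unfolding W_def by (subst prod.nat_ivl_Suc') (auto simp: mult.commute)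

lemma W_nz: "W n \<noteq> 0"
  unfolding W_def using w by (auto simp: prod_zero_iff)

lemma sp: "space (M n) = UNIV"
  using sets_eq_imp_space_eq[OF MS[of n]] by simp

lemma spP: "space (Pi\<^sub>M UNIV M) = UNIV"
  by (auto simp: space_PiM sp)

lemma meas_mult: "(\<lambda>x. c * x) \<in> borel_measurable (borel :: 'a measure)"
  by measurable

lemma img: "(c::'a) \<noteq> 0 \<Longrightarrow> (\<lambda>t. c * t) ` A = (\<lambda>t. inverse c * t) -` A"
proof (rule set_eqI, rule iffI)
  fix x assume "c \<noteq> 0" "x \<in> (\<lambda>t. c * t) ` A" then show "x \<in> (\<lambda>t. inverse c * t) -` A"
    by (auto simp: mult.assoc[symmetric])
next
  fix x assume c: "c \<noteq> 0" and "x \<in> (\<lambda>t. inverse c * t) -` A"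
  then have "inverse c * x \<in> A" by simp
  moreover have "x = c * (inverse c * x)" using c by (simp add: mult.assoc[symmetric])
  ultimately show "x \<in> (\<lambda>t. c * t) ` A" by blast
qed

lemma imgimg: "(\<lambda>t. W j * t) ` ((\<lambda>t. w (Suc j) * t) ` X) = (\<lambda>t. W (Suc j) * t) ` X"
  unfolding image_image by (simp add: W_Suc mult.assoc)

lemma img_borel: "A \<in> sets borel \<Longrightarrow> (c::'a) \<noteq> 0 \<Longrightarrow> (\<lambda>t. c * t) ` A \<in> sets borel"
  using measurable_sets_borel[OF meas_mult] by (simp add: img)

lemma pre_borel: "A \<in> sets borel \<Longrightarrow> (\<lambda>t. (c::'a) * t) -` A \<in> sets borel"
  using measurable_sets_borel[OF meas_mult] by simp

definition "rel \<longleftrightarrow> (\<forall>j. \<forall>A\<in>sets borel. emeasure (M j) A = emeasure (M (Suc j)) ((\<lambda>x. w (Suc j) * x) -` A))"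

lemma A1:
  assumes rel shows "A \<in> sets borel \<Longrightarrow> emeasure (M n) A = emeasure (M 0) ((\<lambda>t. W n * t) ` A)"
proof (induction n arbitrary: A)
  case 0 then show ?case by (simp add: W_def)
next
  case (Suc n)
  define c where "c = w (Suc n)"
  have c: "c \<noteq> 0" using w c_def by simp
  have A': "(\<lambda>t. c * t) ` A \<in> sets borel" using img_borel[OF Suc.prems c] .
  have "emeasure (M n) ((\<lambda>t. c * t) ` A) = emeasure (M (Suc n)) ((\<lambda>x. c * x) -` ((\<lambda>t. c * t) ` A))"
    using assms A' unfolding rel_def c_def by blast
  also have "(\<lambda>x. c * x) -` ((\<lambda>t. c * t) ` A) = A" using c by auto
  finally have 1: "emeasure (M (Suc n)) A = emeasure (M n) ((\<lambda>t. c * t) ` A)" by simp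
  have "(\<lambda>t. W n * t) ` ((\<lambda>t. c * t) ` A) = (\<lambda>t. W (Suc n) * t) ` A"
    unfolding c_def imgimg ..
  then show ?case using 1 Suc.IH[OF A'] by simp
qed

lemma A2:
  assumes H: "\<forall>n\<ge>1. \<forall>A \<in> sets borel. emeasure (M n) A = emeasure (M 0) ((\<lambda>t. W n * t) ` A)"
  shows rel
  unfolding rel_def
proof (intro allI ballI)
  fix j and A :: "'a set" assume A: "A \<in> sets borel"
  have H': "emeasure (M n) A = emeasure (M 0) ((\<lambda>t. W n * t) ` A)" if "A \<in> sets borel" for n A
    using H that by (cases n) (auto simp: W_def)
  define c where "c = w (Suc j)"
  have c: "c \<noteq> 0" using w c_def by simp
  have "(\<lambda>t. W (Suc j) * t) ` ((\<lambda>x. c * x) -` A) = (\<lambda>t. W j * t) ` ((\<lambda>t. c * t) ` ((\<lambda>x. c * x) -` A))"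
    unfolding c_def imgimg ..
  also have "(\<lambda>t. c * t) ` ((\<lambda>x. c * x) -` A) = A" using c
    by (simp add: img mult.assoc[symmetric])
  finally show "emeasure (M j) A = emeasure (M (Suc j)) ((\<lambda>x. w (Suc j) * x) -` A)"
    using H'[OF A, of j] H'[OF pre_borel[OF A], of "Suc j" c] by (simp add: c_def)
qed

abbreviation "P \<equiv> Pi\<^sub>M UNIV M"
definition "invar \<longleftrightarrow> (\<forall>B \<in> sets P. emeasure P (wshift w -` B \<inter> space P) = emeasure P B)"

sublocale PP: product_prob_space M UNIV
  using MP by (auto simp: product_prob_space_def product_prob_space_axioms_def product_sigma_finite_def prob_space_imp_sigma_finite)

lemma B1: assumes invar shows rel
  unfolding rel_def
proof (intro allI ballI)
  fix j and A :: "'a set" assume A: "A \<in> sets borel"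
  define c where "c = w (Suc j)"
  have AM: "A \<in> sets (M j)" using A MS by simp
  have AM': "(\<lambda>x. c * x) -` A \<in> sets (M (Suc j))" using pre_borel[OF A] MS by simp
  have B: "{x\<in>space P. x j \<in> A} \<in> sets P"
    using AM sp by (intro sets_Collect_single') auto
  have S: "wshift w -` {x\<in>space P. x j \<in> A} \<inter> space P = {x\<in>space P. x (Suc j) \<in> (\<lambda>x. c * x) -` A}"
    by (auto simp: spP wshift_def c_def)
  have eq1: "emeasure P (wshift w -` {x\<in>space P. x j \<in> A} \<inter> space P) = emeasure P {x\<in>space P. x j \<in> A}"
    using assms B unfolding invar_def by blast
  have eq2: "emeasure P {x\<in>space P. x (Suc j) \<in> (\<lambda>x. c * x) -` A} = emeasure (M (Suc j)) ((\<lambda>x. c * x) -` A)"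
    by (rule PP.emeasure_PiM_Collect_single) (simp_all add: AM')
  have "emeasure (M (Suc j)) ((\<lambda>x. c * x) -` A) = emeasure P {x\<in>space P. x j \<in> A}"
    using eq1 eq2 S by simp
  also have "\<dots> = emeasure (M j) A"
    using AM by (simp add: PP.emeasure_PiM_Collect_single)
  finally show "emeasure (M j) A = emeasure (M (Suc j)) ((\<lambda>x. w (Suc j) * x) -` A)"
    by (simp add: c_def)
qed

lemma f_meas: "wshift w \<in> measurable P P"
proof -
  have "sets P = sets (Pi\<^sub>M UNIV (\<lambda>_. borel :: 'a measure))"
    by (intro sets_PiM_cong) (auto simp: MS)
  moreover have "wshift w \<in> measurable (Pi\<^sub>M UNIV (\<lambda>_. borel :: 'a measure)) (Pi\<^sub>M UNIV (\<lambda>_. borel :: 'a measure))"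
    unfolding wshift_def proof (rule measurable_PiM_single')
    fix j :: nat
    show "(\<lambda>\<omega>. w (Suc j) * \<omega> (Suc j)) \<in> borel_measurable (Pi\<^sub>M UNIV (\<lambda>_. borel))"
      using measurable_compose[OF measurable_component_singleton[of "Suc j" UNIV "\<lambda>_. borel"] meas_mult[of "w (Suc j)"]]
      by simp
  qed (auto simp: space_PiM)
  ultimately show ?thesis by (simp cong: measurable_cong_sets)
qed

lemma B2: assumes rel shows invar
proof -
  have D: "distr P P (wshift w) = P"
  proof (rule PP.PiM_eq)
    show "sets (distr P P (wshift w)) = sets P" by simp
  next
    fix J and F :: "nat \<Rightarrow> 'a set"
    assume J: "finite J" "J \<subseteq> UNIV" and F: "\<And>j. j \<in> J \<Longrightarrow> F j \<in> sets (M j)"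
    define G where "G i = (\<lambda>y. w i * y) -` F (i - 1)" for i
    have G: "G i \<in> sets (M i)" if i: "i \<in> Suc ` J" for i
    proof -
      obtain j where j: "i = Suc j" "j \<in> J" using i by blast
      have "F j \<in> sets borel" using F[OF j(2)] MS[of j] by simp
      then have "G i \<in> sets borel" unfolding G_def j(1) using pre_borel by simp
      then show ?thesis using MS[of i] by simp
    qed
    have E: "prod_emb UNIV M J (Pi\<^sub>E J F) \<in> sets P"
      using F J by (intro sets_PiM_I) auto
    have S: "wshift w -` prod_emb UNIV M J (Pi\<^sub>E J F) \<inter> space P = {x\<in>space P. \<forall>i\<in>Suc ` J. x i \<in> G i}"
    proof -
      have "prod_emb UNIV M J (Pi\<^sub>E J F) = {x. \<forall>i\<in>J. x i \<in> F i}"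
        unfolding prod_emb_def by (auto simp: restrict_PiE_iff space_PiM sp)
      then show ?thesis unfolding spP wshift_def G_def by auto
    qed
    have "emeasure (distr P P (wshift w)) (prod_emb UNIV M J (Pi\<^sub>E J F))
        = emeasure P {x\<in>space P. \<forall>i\<in>Suc ` J. x i \<in> G i}"
      by (subst emeasure_distr[OF f_meas E]) (simp add: S)
    also have "\<dots> = (\<Prod>i\<in>Suc ` J. emeasure (M i) (G i))"
      using J G by (intro PP.emeasure_PiM_Collect) auto
    also have "\<dots> = (\<Prod>j\<in>J. emeasure (M (Suc j)) (G (Suc j)))"
      by (subst prod.reindex) (simp_all add: inj_on_def)
    also have "\<dots> = (\<Prod>j\<in>J. emeasure (M j) (F j))"
    proof (rule prod.cong[OF refl])
      fix j assume j: "j \<in> J"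
      have "F j \<in> sets borel" using F[OF j] MS[of j] by simp
      then show "emeasure (M (Suc j)) (G (Suc j)) = emeasure (M j) (F j)"
        using assms unfolding rel_def G_def by simp
    qed
    finally show "emeasure (distr P P (wshift w)) (prod_emb UNIV M J (Pi\<^sub>E J F)) = (\<Prod>j\<in>J. emeasure (M j) (F j))" .
  qed
  show ?thesis
  proof (unfold invar_def, intro ballI)
    fix B assume "B \<in> sets P"
    then have "emeasure P (wshift w -` B \<inter> space P) = emeasure (distr P P (wshift w)) B"
      using f_meas by (simp add: emeasure_distr)
    then show "emeasure P (wshift w -` B \<inter> space P) = emeasure P B" using D by simp
  qed
qed

lemma main: "invar \<longleftrightarrow> (\<forall>n\<ge>1. \<forall>A \<in> sets borel.
          emeasure (M n) A = emeasure (M 0) ((\<lambda>t. (\<Prod>k=1..n. w k) * t) ` A))"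
  using A1 A2 B1 B2 unfolding W_def by blast

end

lemma gen:
  fixes M :: "nat \<Rightarrow> 'a::{real_normed_field,second_countable_topology} measure" and w :: "nat \<Rightarrow> 'a"
  assumes "\<forall>n. prob_space (M n) \<and> sets (M n) = sets borel" "\<forall>n\<ge>1. w n \<noteq> 0"
  shows "(\<forall>B \<in> sets (Pi\<^sub>M UNIV M).
          emeasure (Pi\<^sub>M UNIV M) (wshift w -` B \<inter> space (Pi\<^sub>M UNIV M))
            = emeasure (Pi\<^sub>M UNIV M) B)
       \<longleftrightarrow>
       (\<forall>n\<ge>1. \<forall>A \<in> sets borel.
          emeasure (M n) A = emeasure (M 0) ((\<lambda>t. (\<Prod>k=1..n. w k) * t) ` A))"
proof -
  interpret wsetup M w using assms by (intro wsetup.intro) auto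
  show ?thesis using main unfolding invar_def .
qed

theorem lemma5p2:
  shows
  "(\<forall>(M :: nat \<Rightarrow> real measure) (w :: nat \<Rightarrow> real).
      (\<forall>n. prob_space (M n) \<and> sets (M n) = sets borel) \<longrightarrow>
      (\<forall>n\<ge>1. w n \<noteq> 0) \<longrightarrow>
      ((\<forall>B \<in> sets (Pi\<^sub>M UNIV M).
          emeasure (Pi\<^sub>M UNIV M) (wshift w -` B \<inter> space (Pi\<^sub>M UNIV M))
            = emeasure (Pi\<^sub>M UNIV M) B)
       \<longleftrightarrow>
       (\<forall>n\<ge>1. \<forall>A \<in> sets borel.
          emeasure (M n) A = emeasure (M 0) ((\<lambda>t. (\<Prod>k=1..n. w k) * t) ` A))))
   \<and>
   (\<forall>(M :: nat \<Rightarrow> complex measure) (w :: nat \<Rightarrow> complex).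
      (\<forall>n. prob_space (M n) \<and> sets (M n) = sets borel) \<longrightarrow>
      (\<forall>n\<ge>1. w n \<noteq> 0) \<longrightarrow>
      ((\<forall>B \<in> sets (Pi\<^sub>M UNIV M).
          emeasure (Pi\<^sub>M UNIV M) (wshift w -` B \<inter> space (Pi\<^sub>M UNIV M))
            = emeasure (Pi\<^sub>M UNIV M) B)
       \<longleftrightarrow>
       (\<forall>n\<ge>1. \<forall>A \<in> sets borel.
          emeasure (M n) A = emeasure (M 0) ((\<lambda>t. (\<Prod>k=1..n. w k) * t) ` A))))"
proof (intro conjI allI impI)
  fix M :: "nat \<Rightarrow> real measure" and w :: "nat \<Rightarrow> real"
  assume "\<forall>n. prob_space (M n) \<and> sets (M n) = sets borel" "\<forall>n\<ge>1. w n \<noteq> 0"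
  from gen[OF this] show "(\<forall>B \<in> sets (Pi\<^sub>M UNIV M).
          emeasure (Pi\<^sub>M UNIV M) (wshift w -` B \<inter> space (Pi\<^sub>M UNIV M))
            = emeasure (Pi\<^sub>M UNIV M) B)
       \<longleftrightarrow>
       (\<forall>n\<ge>1. \<forall>A \<in> sets borel.
          emeasure (M n) A = emeasure (M 0) ((\<lambda>t. (\<Prod>k=1..n. w k) * t) ` A))" .
next
  fix M :: "nat \<Rightarrow> complex measure" and w :: "nat \<Rightarrow> complex"
  assume "\<forall>n. prob_space (M n) \<and> sets (M n) = sets borel" "\<forall>n\<ge>1. w n \<noteq> 0"
  from gen[OF this] show "(\<forall>B \<in> sets (Pi\<^sub>M UNIV M).
          emeasure (Pi\<^sub>M UNIV M) (wshift w -` B \<inter> space (Pi\<^sub>M UNIV M))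
            = emeasure (Pi\<^sub>M UNIV M) B)
       \<longleftrightarrow>
       (\<forall>n\<ge>1. \<forall>A \<in> sets borel.
          emeasure (M n) A = emeasure (M 0) ((\<lambda>t. (\<Prod>k=1..n. w k) * t) ` A))" .
qed

end
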